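(* Every (one-sided) infinite word that contains no $3$-antipower as a factor contains at most two distinct letters.
   Context: A $3$-antipower is a finite word $u_1u_2u_3$ with $|u_1|=|u_2|=|u_3|$ and $u_1,u_2,u_3$ pairwise distinct; a factor is a contiguous subword. *)

theory Defs
  imports Main
begin

definition is_3_antipower :: "'a list \<Rightarrow> bool" where
  "is_3_antipower w \<longleftrightarrow> (\<exists>u1 u2 u3. w = u1 @ u2 @ u3 \<and>
     length u1 = length u2 \<and> length u2 = length u3 \<and>
     u1 \<noteq> u2 \<and> u1 \<noteq> u3 \<and> u2 \<noteq> u3)"

definition factor :: "(nat \<Rightarrow> 'a) \<Rightarrow> nat \<Rightarrow> nat \<Rightarrow> 'a list" where
  "factor x i n = map x [i..<i + n]"

end

theory Submission
  imports Defs
begin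

lemma factor_append: "factor x i (a + b) = factor x i a @ factor x (i + a) b"
proof -
  have "[i..<i + (a + b)] = [i..<i+a] @ [i+a..<i + (a + b)]"
    using upt_add_eq_append[of i "i+a" b] by (simp add: add.assoc)
  then show ?thesis unfolding factor_def by (simp add: add.assoc)
qed

lemma factor_nth: "r < m \<Longrightarrow> factor x s m ! r = x (s + r)"
  unfolding factor_def by simp

lemma factor_neq: "r < m \<Longrightarrow> x (s + r) \<noteq> x (s' + r) \<Longrightarrow> factor x s m \<noteq> factor x s' m"
  by (metis factor_nth)

lemma noanti:
  assumes H: "\<forall>i n. \<not> is_3_antipower (factor x i n)"
    and "r1 < m" "r2 < m" "r3 < m"
    and "x (s + r1) \<noteq> x (s + m + r1)" "x (s + r2) \<noteq> x (s + 2*m + r2)"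
    "x (s + m + r3) \<noteq> x (s + 2*m + r3)"
  shows False
proof -
  have e: "factor x s (m + (m + m)) = factor x s m @ factor x (s+m) m @ factor x (s+2*m) m"
    by (simp add: factor_append mult_2 add.assoc)
  have "is_3_antipower (factor x s (m + (m + m)))"
    unfolding is_3_antipower_def e
    apply (rule exI[of _ "factor x s m"], rule exI[of _ "factor x (s+m) m"], rule exI[of _ "factor x (s+2*m) m"])
    using factor_neq[OF assms(2,5)] factor_neq[OF assms(3,6)] factor_neq[OF assms(4,7)]
    by (simp add: factor_def)
  with H show False by blast
qed

lemma pattern:
  assumes H: "\<forall>i n. \<not> is_3_antipower (factor x i n)"
    and k1: "k \<ge> 1"
    and hb: "\<And>j. p < j \<Longrightarrow> j \<le> p + k \<Longrightarrow> x j = b"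
    and ab: "x p \<noteq> b" and cb: "x (p + k + 1) \<noteq> b" and ac: "x p \<noteq> x (p + k + 1)"
  shows False
proof -
  define a where "a = x p"
  define c where "c = x (p + k + 1)"
  have ab': "a \<noteq> b" and cb': "c \<noteq> b" and ac': "a \<noteq> c" using ab cb ac a_def c_def by auto
  consider (A) t where "k = 3*t + 1" | (B) t where "k = 3*t" "t \<ge> 1"
    | (C) t where "k = 3*t + 2" "t \<ge> 1" | (D) "k = 2"
  proof -
    have "k mod 3 = 0 \<or> k mod 3 = 1 \<or> k mod 3 = 2" by auto
    then show ?thesis
    proof (elim disjE)
      assume "k mod 3 = 0" then show ?thesis using that(2)[of "k div 3"] k1 by auto
    next
      assume h: "k mod 3 = 1"
      have "k = 3 * (k div 3) + 1" using h by presburger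
      then show ?thesis using that(1) by blast
    next
      assume h: "k mod 3 = 2"
      show ?thesis
      proof (cases "k = 2")
        case True then show ?thesis using that(4) by auto
      next
        case False
        have "k = 3 * (k div 3) + 2" "k div 3 \<ge> 1" using h False by presburger+
        then show ?thesis using that(3) by blast
      qed
    qed
  qed
  then show False
  proof cases
    case (A t)
    have 1: "x (p + (t+1) + 0) = b" using hb A by auto
    have 2: "x (p + 2*(t+1) + t) = c" using A c_def by (simp add: algebra_simps)
    have 3: "x (p + (t+1) + t) = b" using hb A by auto
    have 4: "x (p + t) \<noteq> c" using hb[of "p+t"] A ab' ac' cb' a_def by (cases t) auto
    show False
      by (rule noanti[OF H, of 0 "t+1" t t p]) (use 1 2 3 4 ab' ac' cb' a_def in auto)
  next
    case (B t)
    have 1: "x (p + (t+1) + 0) = b" using hb B by auto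
    have 2: "x (p + 2*(t+1) + (t-1)) = c" using B c_def by (simp add: algebra_simps)
    have 3: "x (p + (t+1) + (t-1)) = b" using hb B by auto
    have 4: "x (p + (t-1)) \<noteq> c" using hb[of "p+(t-1)"] B ab' ac' cb' a_def
      by (cases "t = 1") auto
    show False
      by (rule noanti[OF H, of 0 "t+1" "t-1" "t-1" p]) (use 1 2 3 4 ab' ac' cb' a_def B in auto)
  next
    case (C t)
    have 1: "x (p + (t+2) + 0) = b" using hb C by auto
    have 2: "x (p + 2*(t+2) + (t-1)) = c" using C c_def by (simp add: algebra_simps)
    have 3: "x (p + (t+2) + (t-1)) = b" using hb C by auto
    have 4: "x (p + (t-1)) \<noteq> c" using hb[of "p+(t-1)"] C ab' ac' cb' a_def
      by (cases "t = 1") auto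
    show False
      by (rule noanti[OF H, of 0 "t+2" "t-1" "t-1" p]) (use 1 2 3 4 ab' ac' cb' a_def C in auto)
  next
    case D
    have x1: "x (p+1) = b" and x2: "x (p+2) = b" using hb D by auto
    have x3: "x (p+3) = c" using D c_def by (simp add: numeral_3_eq_3)
    have x0: "x p = a" using a_def by simp
    have y: "x (p+4) = b \<or> x (p+4) = c"
    proof (rule ccontr)
      assume "\<not> ?thesis"
      then show False
        by (intro noanti[OF H, of 0 1 0 0 "p+2"]) (use x2 x3 cb' in \<open>auto simp: eval_nat_numeral\<close>)
    qed
    show False
    proof (cases "x (p+4) = c")
      case True
      show False
        by (rule noanti[OF H, of 0 2 0 0 p]) (use True x0 x1 x2 x3 ab' ac' cb' in \<open>auto simp: eval_nat_numeral\<close>)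
    next
      case False
      with y have y4: "x (p+4) = b" by simp
      have z: "x (p+5) = c"
      proof (rule ccontr)
        assume "x (p+5) \<noteq> c"
        then show False
          by (intro noanti[OF H, of 0 2 0 1 p]) (use y4 x0 x1 x2 x3 ab' ac' cb' in \<open>auto simp: eval_nat_numeral\<close>)
      qed
      have u: "x (p+6) = b"
      proof (rule ccontr)
        assume "x (p+6) \<noteq> b"
        then show False
          by (intro noanti[OF H, of 0 2 0 1 "p+1"]) (use y4 z x0 x1 x2 x3 ab' ac' cb' in \<open>auto simp: eval_nat_numeral\<close>)
      qed
      show False
        by (rule noanti[OF H, of 0 3 0 0 p]) (use y4 z u x0 x1 x2 x3 ab' ac' cb' in \<open>auto simp: eval_nat_numeral\<close>)
    qed
  qed
qed

lemma back_run: fixes x :: "nat \<Rightarrow> 'a" shows "i \<le> q \<Longrightarrow> x i \<noteq> b \<Longrightarrow> \<exists>p\<le>q. x p \<noteq> b \<and> (\<forall>j. p < j \<and> j \<le> q \<longrightarrow> x j = b)"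
proof (induction q)
  case 0 then show ?case by auto
next
  case (Suc q)
  show ?case
  proof (cases "x (Suc q) = b")
    case True
    then have "i \<le> q" using Suc.prems by (cases "i = Suc q") auto
    then obtain p where "p \<le> q" "x p \<noteq> b" "\<forall>j. p < j \<and> j \<le> q \<longrightarrow> x j = b"
      using Suc by blast
    then show ?thesis using True by (intro exI[of _ p]) (auto simp: le_Suc_eq)
  next
    case False then show ?thesis by auto
  qed
qed

lemma no3:
  assumes H: "\<forall>i n. \<not> is_3_antipower (factor x i n)"
  shows "\<not> (\<exists>i j l. x i \<noteq> x j \<and> x i \<noteq> x l \<and> x j \<noteq> x l)"
proof
  define P where "P n \<longleftrightarrow> (\<exists>i j l. i \<le> n \<and> j \<le> n \<and> l \<le> n \<and> x i \<noteq> x j \<and> x i \<noteq> x l \<and> x j \<noteq> x l)" for n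
  assume "\<exists>i j l. x i \<noteq> x j \<and> x i \<noteq> x l \<and> x j \<noteq> x l"
  then obtain i j l where "x i \<noteq> x j \<and> x i \<noteq> x l \<and> x j \<noteq> x l" by blast
  then have "P (i + j + l)" unfolding P_def by (intro exI[of _ i] exI[of _ j] exI[of _ l]) auto
  define N where "N = (LEAST n. P n)"
  have PN: "P N" unfolding N_def by (rule LeastI) fact
  have min: "\<And>n. n < N \<Longrightarrow> \<not> P n" unfolding N_def by (rule not_less_Least)
  have N0: "N \<noteq> 0"
  proof
    assume "N = 0" with PN show False unfolding P_def by auto
  qed
  have newm: "x m \<noteq> x N" if "m < N" for m
  proof
    assume e: "x m = x N"
    from PN obtain i j l where h: "i \<le> N" "j \<le> N" "l \<le> N" "x i \<noteq> x j" "x i \<noteq> x l" "x j \<noteq> x l"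
      unfolding P_def by blast
    define f where "f y = (if y = N then m else y)" for y
    have fl: "f y \<le> N - 1" if "y \<le> N" for y using that \<open>m < N\<close> unfolding f_def by auto
    have fx: "x (f y) = x y" for y using e unfolding f_def by auto
    have "P (N - 1)" unfolding P_def
      by (rule exI[of _ "f i"], rule exI[of _ "f j"], rule exI[of _ "f l"]) (use h fl fx in auto)
    with min N0 show False by auto
  qed
  obtain i j where ij: "i < N" "j < N" "x i \<noteq> x j"
  proof -
    from PN obtain i j l where h: "i \<le> N" "j \<le> N" "l \<le> N" "x i \<noteq> x j" "x i \<noteq> x l" "x j \<noteq> x l"
      unfolding P_def by blast
    have "\<not> P (N - 1)" using min N0 by auto
    then have "i = N \<or> j = N \<or> l = N"
    proof (rule contrapos_np)
      assume "\<not> (i = N \<or> j = N \<or> l = N)"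
      then have "i \<le> N - 1" "j \<le> N - 1" "l \<le> N - 1" using h by auto
      then show "P (N - 1)" unfolding P_def using h by blast
    qed
    then show ?thesis proof (elim disjE)
      assume "i = N" then show ?thesis using h that[of j l] by (auto simp: order.order_iff_strict)
    next
      assume "j = N" then show ?thesis using h that[of i l] by (auto simp: order.order_iff_strict)
    next
      assume "l = N" then show ?thesis using h that[of i j] by (auto simp: order.order_iff_strict)
    qed
  qed
  define b where "b = x (N - 1)"
  obtain i' where i': "i' \<le> N - 1" "x i' \<noteq> b" proof -
    have "i \<le> N - 1" "j \<le> N - 1" using ij by auto
    then show ?thesis using ij(3) that by blast
  qed
  obtain p where p: "p \<le> N - 1" "x p \<noteq> b" "\<forall>j. p < j \<and> j \<le> N - 1 \<longrightarrow> x j = b"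
    using back_run[of i' "N - 1" x b, OF i'] by blast
  have pN: "p < N - 1" proof -
    have "p \<noteq> N - 1" using p b_def by auto
    then show ?thesis using p by simp
  qed
  show False
  proof (rule pattern[OF H, of "N - 1 - p" p b])
    show "1 \<le> N - 1 - p" using pN by simp
    show "x j = b" if "p < j" "j \<le> p + (N - 1 - p)" for j using p that pN by auto
    show "x p \<noteq> b" by fact
    have e: "p + (N - 1 - p) + 1 = N" using pN by simp
    show "x (p + (N - 1 - p) + 1) \<noteq> b" unfolding e b_def using newm[of "N - 1"] N0 by auto
    show "x p \<noteq> x (p + (N - 1 - p) + 1)" unfolding e using newm pN by simp
  qed
qed

theorem corollary10:
  fixes x :: "nat \<Rightarrow> 'a"
  assumes "\<forall>i n. \<not> is_3_antipower (factor x i n)"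
  shows "finite (range x) \<and> card (range x) \<le> 2"
proof -
  have n3: "\<not> (\<exists>i j l. x i \<noteq> x j \<and> x i \<noteq> x l \<and> x j \<noteq> x l)" by (rule no3[OF assms])
  show ?thesis
  proof (cases "\<forall>j. x j = x 0")
    case True
    then have "range x = {x 0}" by auto
    then show ?thesis by simp
  next
    case False
    then obtain j where j: "x j \<noteq> x 0" by blast
    have "range x \<subseteq> {x 0, x j}" using n3 j by blast
    moreover have "card {x 0, x j} \<le> 2" by (simp add: card_insert_le_m1)
    moreover have "finite {x 0, x j}" by simp
    ultimately have "finite (range x)" "card (range x) \<le> card {x 0, x j}"
      using finite_subset card_mono by blast+
    then show ?thesis using \<open>card {x 0, x j} \<le> 2\<close> by linarith
  qed
qed

end
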